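(* Let $L,L'$ be finite simplicial complexes, $\varphi: L\to L'$ a bijective simplicial finite-fibration, and $n\ge2$. Then $$\mathrm{scat}(\varphi)\le\mathrm{scat}(L)\le\mathrm{TC}(\varphi)\le\min\{\mathrm{TC}(L),\mathrm{TC}_n(\varphi)\}\le\mathrm{TC}_n(L).$$
   Context: Simplicial complexes are abstract and edge-path connected; $K^n$ is the $n$-fold categorical product and $K\times K'$ the categorical product (vertices are tuples of vertices; a set of vertices is a simplex iff each coordinate projection is a simplex). Simplicial maps $f,g: K\to K'$ are contiguous if $f(\sigma)\cup g(\sigma)$ is a simplex for every simplex $\sigma$; $f\sim g$ if joined by a finite chain of contiguous simplicial maps. $\mathrm{SD}(\varphi_1,\dots,\varphi_m)$ for simplicial maps $K\to K'$ is the least $k\ge0$ such that $K$ is a union of subcomplexes $K_0,\dots,K_k$ with $\varphi_i|_{K_j}\sim\varphi_l|_{K_j}$ for all $i,l,j$. With $p_i: L^n\to L$ the projections: $\mathrm{TC}_n(L)=\mathrm{SD}(p_1,\dots,p_n)$, $\mathrm{TC}(L)=\mathrm{TC}_2(L)$, $\mathrm{TC}_n(\varphi)=\mathrm{SD}(\varphi\circ p_1,\dots,\varphi\circ p_n)$. For a vertex $v_0$ of $L$ and constant map $c_{v_0}: L\to L$: $\mathrm{scat}(L)=\mathrm{SD}(1_L,c_{v_0})$, $\mathrm{scat}(\varphi)=\mathrm{SD}(\varphi,\varphi\circ c_{v_0})$. $I_m$ is the complex with vertices $0,\dots,m$ and edges $\{i,i+1\}$; $\varphi$ is a simplicial finite-fibration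 if for every finite complex $N$, $m\ge1$, inclusion $i: N\times\{0\}\to N\times I_m$ and simplicial $g: N\times\{0\}\to L$, $G: N\times I_m\to L'$ with $\varphi\circ g=G\circ i$, there is simplicial $\widetilde G$ with $\widetilde G\circ i=g$, $\varphi\circ\widetilde G=G$. $\mathrm{TC}(\varphi)$ is the simplicial Schwarz genus of $\pi_\varphi: L^I\to L\times L'$, $\delta\mapsto(\delta(0),\varphi(\delta(1)))$, where $L^I$ is the simplicial path complex of $L$; the simplicial Schwarz genus of $p: E\to B$ is the least $k\ge0$ such that $B$ is a union of subcomplexes $B_0,\dots,B_k$ each admitting a simplicial $s: B_j\to E$ with $p\circ s$ the inclusion. *)

theory Defs
  imports Main "HOL-Library.Extended_Nat"
begin

definition simplicial_complex :: "'a set set \<Rightarrow> bool" where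
  "simplicial_complex K \<longleftrightarrow>
     (\<forall>\<sigma>\<in>K. finite \<sigma> \<and> \<sigma> \<noteq> {}) \<and> (\<forall>\<sigma>\<in>K. \<forall>\<tau>. \<tau> \<subseteq> \<sigma> \<and> \<tau> \<noteq> {} \<longrightarrow> \<tau> \<in> K)"

definition vertices :: "'a set set \<Rightarrow> 'a set" where
  "vertices K = \<Union>K"

definition finite_complex :: "'a set set \<Rightarrow> bool" where
  "finite_complex K \<longleftrightarrow> finite (vertices K)"

definition edge_path_connected :: "'a set set \<Rightarrow> bool" where
  "edge_path_connected K \<longleftrightarrow>
     (\<forall>u\<in>vertices K. \<forall>v\<in>vertices K. (u, v) \<in> {(x, y). {x, y} \<in> K}\<^sup>*)"

definition subcomplex :: "'a set set \<Rightarrow> 'a set set \<Rightarrow> bool" where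
  "subcomplex J K \<longleftrightarrow> J \<subseteq> K \<and> simplicial_complex J"

text \<open>Simplicial maps are represented by total functions on vertex types; only their
  values on vertices matter.\<close>

definition simplicial_map :: "'a set set \<Rightarrow> 'b set set \<Rightarrow> ('a \<Rightarrow> 'b) \<Rightarrow> bool" where
  "simplicial_map K K' f \<longleftrightarrow> (\<forall>\<sigma>\<in>K. f ` \<sigma> \<in> K')"

definition contiguous :: "'a set set \<Rightarrow> 'b set set \<Rightarrow> ('a \<Rightarrow> 'b) \<Rightarrow> ('a \<Rightarrow> 'b) \<Rightarrow> bool" where
  "contiguous K K' f g \<longleftrightarrow> simplicial_map K K' f \<and> simplicial_map K K' g \<and>
     (\<forall>\<sigma>\<in>K. f ` \<sigma> \<union> g ` \<sigma> \<in> K')"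

definition contiguity_equiv :: "'a set set \<Rightarrow> 'b set set \<Rightarrow> ('a \<Rightarrow> 'b) \<Rightarrow> ('a \<Rightarrow> 'b) \<Rightarrow> bool" where
  "contiguity_equiv K K' f g \<longleftrightarrow> simplicial_map K K' f \<and> simplicial_map K K' g \<and>
     (contiguous K K')\<^sup>*\<^sup>* f g"

definition cprod :: "'a set set \<Rightarrow> 'b set set \<Rightarrow> ('a \<times> 'b) set set" where
  "cprod K K' = {\<sigma>. finite \<sigma> \<and> \<sigma> \<noteq> {} \<and> fst ` \<sigma> \<in> K \<and> snd ` \<sigma> \<in> K'}"

definition cpower :: "'a set set \<Rightarrow> nat \<Rightarrow> 'a list set set" where
  "cpower K n = {\<sigma>. finite \<sigma> \<and> \<sigma> \<noteq> {} \<and> (\<forall>xs\<in>\<sigma>. length xs = n) \<and>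
                     (\<forall>i<n. (\<lambda>xs. xs ! i) ` \<sigma> \<in> K)}"

definition SD :: "'a set set \<Rightarrow> 'b set set \<Rightarrow> ('a \<Rightarrow> 'b) list \<Rightarrow> enat" where
  "SD K K' phis = Inf {enat k | k. \<exists>Ks :: nat \<Rightarrow> 'a set set.
      (\<forall>j\<le>k. subcomplex (Ks j) K) \<and> (\<Union>j\<le>k. Ks j) = K \<and>
      (\<forall>j\<le>k. \<forall>i<length phis. \<forall>l<length phis.
          contiguity_equiv (Ks j) K' (phis ! i) (phis ! l))}"

definition TCn :: "'a set set \<Rightarrow> nat \<Rightarrow> enat" where
  "TCn L n = SD (cpower L n) L (map (\<lambda>i xs. xs ! i) [0..<n])"

definition TC :: "'a set set \<Rightarrow> enat" where
  "TC L = TCn L 2"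

definition TCn_map :: "'a set set \<Rightarrow> 'b set set \<Rightarrow> ('a \<Rightarrow> 'b) \<Rightarrow> nat \<Rightarrow> enat" where
  "TCn_map L L' \<phi> n = SD (cpower L n) L' (map (\<lambda>i xs. \<phi> (xs ! i)) [0..<n])"

definition scat :: "'a set set \<Rightarrow> 'a \<Rightarrow> enat" where
  "scat L v0 = SD L L [id, (\<lambda>_. v0)]"

definition scat_map :: "'a set set \<Rightarrow> 'b set set \<Rightarrow> ('a \<Rightarrow> 'b) \<Rightarrow> 'a \<Rightarrow> enat" where
  "scat_map L L' \<phi> v0 = SD L L' [\<phi>, (\<lambda>_. \<phi> v0)]"

definition interval :: "nat \<Rightarrow> nat set set" where
  "interval m = {\<sigma>. \<sigma> \<noteq> {} \<and> \<sigma> \<subseteq> {0..m} \<and> (\<exists>i. \<sigma> \<subseteq> {i, Suc i})}"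

text \<open>Test complexes N are taken with vertices in nat (every finite complex is isomorphic
  to one of these); following the standing convention they are edge-path connected.\<close>
definition finite_fibration :: "'a set set \<Rightarrow> 'b set set \<Rightarrow> ('a \<Rightarrow> 'b) \<Rightarrow> bool" where
  "finite_fibration L L' \<phi> \<longleftrightarrow>
    (\<forall>(N :: nat set set) (m :: nat) (g :: nat \<times> nat \<Rightarrow> 'a) (G :: nat \<times> nat \<Rightarrow> 'b).
       simplicial_complex N \<and> edge_path_connected N \<and> finite_complex N \<and> m \<ge> 1 \<and>
       simplicial_map (cprod N {{0}}) L g \<and>
       simplicial_map (cprod N (interval m)) L' G \<and>
       (\<forall>x\<in>vertices (cprod N {{0}}). \<phi> (g x) = G x)
       \<longrightarrow> (\<exists>Gt :: nat \<times> nat \<Rightarrow> 'a.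
              simplicial_map (cprod N (interval m)) L Gt \<and>
              (\<forall>x\<in>vertices (cprod N {{0}}). Gt x = g x) \<and>
              (\<forall>x\<in>vertices (cprod N (interval m)). \<phi> (Gt x) = G x)))"

definition spaths :: "'a set set \<Rightarrow> (nat \<Rightarrow> 'a) set" where
  "spaths K = {\<gamma>. (\<forall>i. {\<gamma> i, \<gamma> (Suc i)} \<in> K) \<and> (\<exists>N. \<forall>i\<ge>N. \<gamma> i = \<gamma> N)}"

text \<open>Path complex K^I: a finite nonempty set of paths is a simplex iff for every i the
  images of the edge {i,i+1} span a simplex (exponential object).\<close>
definition path_complex :: "'a set set \<Rightarrow> (nat \<Rightarrow> 'a) set set" where
  "path_complex K = {\<Gamma>. finite \<Gamma> \<and> \<Gamma> \<noteq> {} \<and> \<Gamma> \<subseteq> spaths K \<and>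
                        (\<forall>i. (\<Union>\<gamma>\<in>\<Gamma>. {\<gamma> i, \<gamma> (Suc i)}) \<in> K)}"

definition path_end :: "(nat \<Rightarrow> 'a) \<Rightarrow> 'a" where
  "path_end \<gamma> = \<gamma> (LEAST N. \<forall>i\<ge>N. \<gamma> i = \<gamma> N)"

definition pi_map :: "('a \<Rightarrow> 'b) \<Rightarrow> (nat \<Rightarrow> 'a) \<Rightarrow> 'a \<times> 'b" where
  "pi_map \<phi> \<delta> = (\<delta> 0, \<phi> (path_end \<delta>))"

definition schwarz_genus :: "'e set set \<Rightarrow> 'b set set \<Rightarrow> ('e \<Rightarrow> 'b) \<Rightarrow> enat" where
  "schwarz_genus E B p = Inf {enat k | k. \<exists>Bs :: nat \<Rightarrow> 'b set set.
      (\<forall>j\<le>k. subcomplex (Bs j) B) \<and> (\<Union>j\<le>k. Bs j) = B \<and>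
      (\<forall>j\<le>k. \<exists>s :: 'b \<Rightarrow> 'e. simplicial_map (Bs j) E s \<and>
                 (\<forall>v\<in>vertices (Bs j). p (s v) = v))}"

definition TC_map :: "'a set set \<Rightarrow> 'b set set \<Rightarrow> ('a \<Rightarrow> 'b) \<Rightarrow> enat" where
  "TC_map L L' \<phi> = schwarz_genus (path_complex L) (cprod L L') (pi_map \<phi>)"

end

theory Submission
  imports Defs
begin

lemma sc_face:
  assumes "simplicial_complex K" "\<sigma> \<in> K" "\<tau> \<subseteq> \<sigma>" "\<tau> \<noteq> {}"
  shows "\<tau> \<in> K"
proof -
  have "\<forall>\<sigma>\<in>K. \<forall>\<tau>. \<tau> \<subseteq> \<sigma> \<and> \<tau> \<noteq> {} \<longrightarrow> \<tau> \<in> K" using assms(1) unfolding simplicial_complex_def by blast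
  then show ?thesis using assms by blast
qed

lemma sc_fin:
  assumes "simplicial_complex K" "\<sigma> \<in> K"
  shows "finite \<sigma>" "\<sigma> \<noteq> {}"
  using assms unfolding simplicial_complex_def by blast+

lemma sc_intro:
  assumes "\<And>\<sigma>. \<sigma> \<in> K \<Longrightarrow> finite \<sigma> \<and> \<sigma> \<noteq> {}"
    "\<And>\<sigma> \<tau>. \<sigma> \<in> K \<Longrightarrow> \<tau> \<subseteq> \<sigma> \<Longrightarrow> \<tau> \<noteq> {} \<Longrightarrow> \<tau> \<in> K"
  shows "simplicial_complex K"
  unfolding simplicial_complex_def using assms by blast

lemma vertex_singleton:
  assumes "simplicial_complex K" "v \<in> vertices K"
  shows "{v} \<in> K"
proof -
  obtain \<sigma> where s: "\<sigma> \<in> K" "v \<in> \<sigma>" using assms(2) unfolding vertices_def by blast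
  then show ?thesis using sc_face[OF assms(1) s(1)] by blast
qed

lemma in_vertices: "\<sigma> \<in> K \<Longrightarrow> v \<in> \<sigma> \<Longrightarrow> v \<in> vertices K"
  unfolding vertices_def by blast

lemma simplicial_map_comp:
  assumes "simplicial_map K K' f" "simplicial_map K' K'' g"
  shows "simplicial_map K K'' (g \<circ> f)"
  unfolding simplicial_map_def
proof
  fix \<sigma> assume "\<sigma> \<in> K"
  then have "f ` \<sigma> \<in> K'" using assms(1) unfolding simplicial_map_def by blast
  then have "g ` (f ` \<sigma>) \<in> K''" using assms(2) unfolding simplicial_map_def by blast
  then show "(g \<circ> f) ` \<sigma> \<in> K''" by (simp add: image_comp)
qed

lemma contiguous_comp:
  assumes "contiguous K K' f g" "simplicial_map K' K'' \<psi>"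
  shows "contiguous K K'' (\<psi> \<circ> f) (\<psi> \<circ> g)"
proof -
  have "\<forall>\<sigma>\<in>K. (\<psi> \<circ> f) ` \<sigma> \<union> (\<psi> \<circ> g) ` \<sigma> \<in> K''"
  proof
    fix \<sigma> assume "\<sigma> \<in> K"
    then have "f ` \<sigma> \<union> g ` \<sigma> \<in> K'" using assms(1) unfolding contiguous_def by blast
    then have "\<psi> ` (f ` \<sigma> \<union> g ` \<sigma>) \<in> K''" using assms(2) unfolding simplicial_map_def by blast
    then show "(\<psi> \<circ> f) ` \<sigma> \<union> (\<psi> \<circ> g) ` \<sigma> \<in> K''" by (simp add: image_Un image_comp)
  qed
  then show ?thesis using assms simplicial_map_comp unfolding contiguous_def by blast
qed

lemma contiguous_pull:
  assumes "contiguous J K' f g" "simplicial_map P J e"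
  shows "contiguous P K' (f \<circ> e) (g \<circ> e)"
proof -
  have "\<forall>\<sigma>\<in>P. (f \<circ> e) ` \<sigma> \<union> (g \<circ> e) ` \<sigma> \<in> K'"
  proof
    fix \<sigma> assume "\<sigma> \<in> P"
    then have "e ` \<sigma> \<in> J" using assms(2) unfolding simplicial_map_def by blast
    then have "f ` (e ` \<sigma>) \<union> g ` (e ` \<sigma>) \<in> K'" using assms(1) unfolding contiguous_def by blast
    then show "(f \<circ> e) ` \<sigma> \<union> (g \<circ> e) ` \<sigma> \<in> K'" by (simp add: image_comp)
  qed
  then show ?thesis using assms simplicial_map_comp unfolding contiguous_def by blast
qed

lemma ceq_comp:
  assumes "contiguity_equiv K K' f g" "simplicial_map K' K'' \<psi>"
  shows "contiguity_equiv K K'' (\<psi> \<circ> f) (\<psi> \<circ> g)"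
proof -
  have "(contiguous K K')\<^sup>*\<^sup>* f g" using assms(1) unfolding contiguity_equiv_def by blast
  then have "(contiguous K K'')\<^sup>*\<^sup>* (\<psi> \<circ> f) (\<psi> \<circ> g)"
  proof induction
    case base then show ?case by simp
  next
    case (step y z)
    then show ?case using contiguous_comp[OF step(2) assms(2)]
      by (meson rtranclp.rtrancl_into_rtrancl)
  qed
  then show ?thesis using assms simplicial_map_comp unfolding contiguity_equiv_def by blast
qed

lemma ceq_pull:
  assumes "contiguity_equiv J K' f g" "simplicial_map P J e"
  shows "contiguity_equiv P K' (f \<circ> e) (g \<circ> e)"
proof -
  have "(contiguous J K')\<^sup>*\<^sup>* f g" using assms(1) unfolding contiguity_equiv_def by blast
  then have "(contiguous P K')\<^sup>*\<^sup>* (f \<circ> e) (g \<circ> e)"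
  proof induction
    case base then show ?case by simp
  next
    case (step y z)
    then show ?case using contiguous_pull[OF step(2) assms(2)]
      by (meson rtranclp.rtrancl_into_rtrancl)
  qed
  then show ?thesis using assms simplicial_map_comp unfolding contiguity_equiv_def by blast
qed

lemma contiguous_sym: "contiguous K K' f g \<Longrightarrow> contiguous K K' g f"
  unfolding contiguous_def by (simp add: Un_commute)

lemma ceq_sym:
  assumes "contiguity_equiv K K' f g"
  shows "contiguity_equiv K K' g f"
proof -
  have "(contiguous K K')\<^sup>*\<^sup>* f g" using assms(1) unfolding contiguity_equiv_def by blast
  then have "(contiguous K K')\<^sup>*\<^sup>* g f"
  proof induction
    case base then show ?case by simp
  next
    case (step y z)
    then show ?case using contiguous_sym[OF step(2)]
      by (meson converse_rtranclp_into_rtranclp)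
  qed
  then show ?thesis using assms unfolding contiguity_equiv_def by blast
qed

lemma ceq_refl: "simplicial_map K K' f \<Longrightarrow> contiguity_equiv K K' f f"
  unfolding contiguity_equiv_def by simp

lemma contiguous_agree:
  assumes "simplicial_map K K' f" "\<forall>v\<in>vertices K. f v = g v"
  shows "contiguous K K' f g"
proof -
  have eq: "g ` \<sigma> = f ` \<sigma>" if "\<sigma> \<in> K" for \<sigma>
    using assms(2) in_vertices[OF that] by (metis image_cong)
  have "f ` \<sigma> \<in> K'" if "\<sigma> \<in> K" for \<sigma> using assms(1) that unfolding simplicial_map_def by blast
  then show ?thesis using eq unfolding contiguous_def simplicial_map_def by simp
qed

lemma SD_comp:
  assumes "simplicial_map K' K'' \<psi>"
  shows "SD K K'' (map ((\<circ>) \<psi>) phis) \<le> SD K K' phis"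
proof -
  have H: "\<And>(Ks :: nat \<Rightarrow> _) k. (\<forall>j\<le>k. \<forall>i<length phis. \<forall>l<length phis. contiguity_equiv (Ks j) K' (phis ! i) (phis ! l)) \<Longrightarrow>
     (\<forall>j\<le>k. \<forall>i<length (map ((\<circ>) \<psi>) phis). \<forall>l<length (map ((\<circ>) \<psi>) phis).
        contiguity_equiv (Ks j) K'' (map ((\<circ>) \<psi>) phis ! i) (map ((\<circ>) \<psi>) phis ! l))"
    using ceq_comp[OF _ assms] by (simp; blast)
  show ?thesis unfolding SD_def
    by (rule Inf_superset_mono) (use H in blast)
qed


lemma cprod_sc:
  assumes "simplicial_complex L" "simplicial_complex L'"
  shows "simplicial_complex (cprod L L')"
proof (rule sc_intro)
  fix \<sigma> assume "\<sigma> \<in> cprod L L'" then show "finite \<sigma> \<and> \<sigma> \<noteq> {}" unfolding cprod_def by blast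
next
  fix \<sigma> \<tau> assume a: "\<sigma> \<in> cprod L L'" "\<tau> \<subseteq> \<sigma>" "\<tau> \<noteq> {}"
  then have f: "finite \<tau>" unfolding cprod_def using finite_subset by blast
  have "fst ` \<tau> \<in> L" using sc_face[OF assms(1), of "fst ` \<sigma>" "fst ` \<tau>"] a unfolding cprod_def by blast
  moreover have "snd ` \<tau> \<in> L'" using sc_face[OF assms(2), of "snd ` \<sigma>" "snd ` \<tau>"] a unfolding cprod_def by blast
  ultimately show "\<tau> \<in> cprod L L'" using f a(3) unfolding cprod_def by blast
qed

definition pullback :: "'a set set \<Rightarrow> ('a \<Rightarrow> 'c) \<Rightarrow> 'c set set \<Rightarrow> 'a set set" where
  "pullback K e J = {\<sigma>\<in>K. e ` \<sigma> \<in> J}"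

lemma pullback_sub:
  assumes "simplicial_complex K" "simplicial_complex J"
  shows "subcomplex (pullback K e J) K"
  unfolding subcomplex_def
proof
  show "pullback K e J \<subseteq> K" unfolding pullback_def by blast
  show "simplicial_complex (pullback K e J)"
  proof (rule sc_intro)
    fix \<sigma> assume "\<sigma> \<in> pullback K e J" then show "finite \<sigma> \<and> \<sigma> \<noteq> {}"
      using sc_fin[OF assms(1)] unfolding pullback_def by blast
  next
    fix \<sigma> \<tau> assume a: "\<sigma> \<in> pullback K e J" "\<tau> \<subseteq> \<sigma>" "\<tau> \<noteq> {}"
    then have "\<tau> \<in> K" using sc_face[OF assms(1)] unfolding pullback_def by blast
    moreover have "e ` \<tau> \<in> J" using sc_face[OF assms(2), of "e ` \<sigma>" "e ` \<tau>"] a unfolding pullback_def by blast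
    ultimately show "\<tau> \<in> pullback K e J" unfolding pullback_def by blast
  qed
qed

lemma pullback_map: "simplicial_map (pullback K e J) J e"
  unfolding pullback_def simplicial_map_def by blast

lemma pullback_cover:
  assumes "simplicial_map K K2 e" "(\<Union>j\<le>k. Js j) = K2"
  shows "(\<Union>j\<le>k. pullback K e (Js j)) = K"
proof
  show "(\<Union>j\<le>k. pullback K e (Js j)) \<subseteq> K" unfolding pullback_def by blast
  show "K \<subseteq> (\<Union>j\<le>k. pullback K e (Js j))"
  proof
    fix \<sigma> assume "\<sigma> \<in> K"
    then have "e ` \<sigma> \<in> K2" using assms(1) unfolding simplicial_map_def by blast
    then obtain j where "j \<le> k" "e ` \<sigma> \<in> Js j" using assms(2) by blast
    then show "\<sigma> \<in> (\<Union>j\<le>k. pullback K e (Js j))" using \<open>\<sigma> \<in> K\<close> unfolding pullback_def by blast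
  qed
qed

lemma subcomplex_sc: "subcomplex J K \<Longrightarrow> simplicial_complex J"
  unfolding subcomplex_def by blast

lemma path_end_eq:
  assumes "\<forall>i\<ge>M. \<gamma> i = \<gamma> M"
  shows "path_end \<gamma> = \<gamma> M"
proof -
  define N0 where "N0 = (LEAST N. \<forall>i\<ge>N. \<gamma> i = \<gamma> N)"
  have "\<forall>i\<ge>N0. \<gamma> i = \<gamma> N0" unfolding N0_def by (rule LeastI[of _ M]) (rule assms)
  moreover have "N0 \<le> M" unfolding N0_def by (rule Least_le) (rule assms)
  ultimately have "\<gamma> M = \<gamma> N0" by blast
  then show ?thesis unfolding path_end_def N0_def by simp
qed

lemma rtranclp_seq:
  assumes "r\<^sup>*\<^sup>* a b"
  obtains f M where "f 0 = a" "f M = b" "\<forall>i<M. r (f i) (f (Suc i))"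
proof -
  obtain M where "(r ^^ M) a b" using rtranclp_imp_relpowp[OF assms] by blast
  then show ?thesis using that relpowp_fun_conv by metis
qed

lemma section_from_seq:
  assumes "simplicial_complex B" "simplicial_complex L"
    "\<forall>i<M. contiguous B L (f i) (f (Suc i))" "simplicial_map B L (f 0)"
  shows "simplicial_map B (path_complex L) (\<lambda>v i. f (min i M) v)"
    "\<And>v. (\<lambda>i. f (min i M) v) 0 = f 0 v"
    "\<And>v. path_end (\<lambda>i. f (min i M) v) = f M v"
proof -
  have key: "f (min i M) ` \<tau> \<union> f (min (Suc i) M) ` \<tau> \<in> L" if "\<tau> \<in> B" for \<tau> i
  proof (cases "Suc i \<le> M")
    case True
    then show ?thesis using assms(3) that unfolding contiguous_def by (simp add: min_def)
  next
    case False
    have "simplicial_map B L (f M)"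
    proof (cases M)
      case 0 then show ?thesis using assms(4) by simp
    next
      case (Suc m) then show ?thesis using assms(3) unfolding contiguous_def by auto
    qed
    moreover have "min i M = M" "min (Suc i) M = M" using False by auto
    ultimately show ?thesis using that unfolding simplicial_map_def by simp
  qed
  show "simplicial_map B (path_complex L) (\<lambda>v i. f (min i M) v)"
    unfolding simplicial_map_def
  proof
    fix \<tau> assume t: "\<tau> \<in> B"
    let ?G = "(\<lambda>v i. f (min i M) v) ` \<tau>"
    have "finite ?G" "?G \<noteq> {}" using sc_fin[OF assms(1) t] by auto
    moreover have "?G \<subseteq> spaths L"
    proof
      fix \<gamma> assume "\<gamma> \<in> ?G"
      then obtain v where v: "v \<in> \<tau>" "\<gamma> = (\<lambda>i. f (min i M) v)" by blast
      have sv: "{v} \<in> B" using sc_face[OF assms(1) t, of "{v}"] v by blast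
      have "{\<gamma> i, \<gamma> (Suc i)} \<in> L" for i using key[OF sv, of i] v(2) by (simp add: insert_commute)
      moreover have "\<forall>i\<ge>M. \<gamma> i = \<gamma> M" using v(2) by simp
      ultimately show "\<gamma> \<in> spaths L" unfolding spaths_def by blast
    qed
    moreover have "(\<Union>\<gamma>\<in>?G. {\<gamma> i, \<gamma> (Suc i)}) \<in> L" for i
    proof -
      have "(\<Union>\<gamma>\<in>?G. {\<gamma> i, \<gamma> (Suc i)}) = f (min i M) ` \<tau> \<union> f (min (Suc i) M) ` \<tau>" by auto
      then show ?thesis using key[OF t] by simp
    qed
    ultimately show "?G \<in> path_complex L" unfolding path_complex_def by blast
  qed
  show "\<And>v. (\<lambda>i. f (min i M) v) 0 = f 0 v" by simp
  show "\<And>v. path_end (\<lambda>i. f (min i M) v) = f M v"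
    by (subst path_end_eq[of M]) auto
qed


lemma inv_simplicial:
  assumes scL: "simplicial_complex L" and scL': "simplicial_complex L'"
    and phi: "simplicial_map L L' \<phi>"
    and bij: "bij_betw \<phi> (vertices L) (vertices L')"
    and fib: "finite_fibration L L' \<phi>"
  shows "simplicial_map L' L (inv_into (vertices L) \<phi>)"
  unfolding simplicial_map_def
proof
  let ?\<psi> = "inv_into (vertices L) \<phi>"
  have psiV: "?\<psi> y \<in> vertices L" "\<phi> (?\<psi> y) = y" if "y \<in> vertices L'" for y
  proof -
    have "y \<in> \<phi> ` vertices L" using bij that by (simp add: bij_betw_def)
    then show "?\<psi> y \<in> vertices L" "\<phi> (?\<psi> y) = y" by (rule inv_into_into, rule f_inv_into_f)
  qed
  have psiphi: "?\<psi> (\<phi> x) = x" if "x \<in> vertices L" for x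
    using inv_into_f_f[OF conjunct1[OF bij[unfolded bij_betw_def]] that] .
  fix \<sigma> assume s: "\<sigma> \<in> L'"
  have sV: "\<sigma> \<subseteq> vertices L'" using in_vertices[OF s] by blast
  define d where "d = card \<sigma>"
  have fin: "finite \<sigma>" "\<sigma> \<noteq> {}" using sc_fin[OF scL' s] by auto
  then have d0: "0 < d" unfolding d_def by auto
  obtain h where h: "bij_betw h {0..<d} \<sigma>" using ex_bij_betw_nat_finite[OF fin(1)] unfolding d_def by blast
  have hs: "h k \<in> \<sigma>" if "k < d" for k using h that by (auto simp: bij_betw_def)
  have himg: "h ` {0..<d} = \<sigma>" using h by (simp add: bij_betw_def)
  define N :: "nat set set" where "N = {\<tau>. \<tau> \<noteq> {} \<and> \<tau> \<subseteq> {0..<d}}"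
  define g :: "nat \<times> nat \<Rightarrow> 'a" where "g = (\<lambda>_. ?\<psi> (h 0))"
  define G :: "nat \<times> nat \<Rightarrow> 'b" where "G = (\<lambda>(k, t). if t = 0 then h 0 else h k)"
  have vN: "vertices N = {0..<d}"
  proof
    show "vertices N \<subseteq> {0..<d}" unfolding vertices_def N_def by blast
    show "{0..<d} \<subseteq> vertices N"
    proof
      fix k assume "k \<in> {0..<d}" then have "{k} \<in> N" unfolding N_def by blast
      then show "k \<in> vertices N" using in_vertices[of "{k}" N k] by blast
    qed
  qed
  have scN: "simplicial_complex N"
    by (rule sc_intro) (auto simp: N_def intro: finite_subset)
  have epN: "edge_path_connected N"
    unfolding edge_path_connected_def vN
  proof (intro ballI)
    fix u v assume "u \<in> {0..<d}" "v \<in> {0..<d}"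
    then have "{u, v} \<in> N" unfolding N_def by blast
    then show "(u, v) \<in> {(x, y). {x, y} \<in> N}\<^sup>*" by (intro r_into_rtrancl) simp
  qed
  have fN: "finite_complex N" unfolding finite_complex_def vN by simp
  have v0V: "?\<psi> (h 0) \<in> vertices L" using psiV(1) hs[OF d0] sV by blast
  have gmap: "simplicial_map (cprod N {{0::nat}}) L g"
    unfolding simplicial_map_def
  proof
    fix \<tau> assume "\<tau> \<in> cprod N {{0::nat}}"
    then have "\<tau> \<noteq> {}" unfolding cprod_def by blast
    then have "g ` \<tau> = {?\<psi> (h 0)}" unfolding g_def by blast
    then show "g ` \<tau> \<in> L" using vertex_singleton[OF scL v0V] by simp
  qed
  have Gmap: "simplicial_map (cprod N (interval 1)) L' G"
    unfolding simplicial_map_def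
  proof
    fix \<tau> assume t: "\<tau> \<in> cprod N (interval 1)"
    then have ne: "\<tau> \<noteq> {}" and fs: "fst ` \<tau> \<subseteq> {0..<d}" unfolding cprod_def N_def by auto
    have "G ` \<tau> \<subseteq> \<sigma>"
    proof
      fix y assume "y \<in> G ` \<tau>"
      then obtain k t where kt: "(k, t) \<in> \<tau>" "y = G (k, t)" by auto
      then have "k < d" using fs by force
      then show "y \<in> \<sigma>" using kt hs d0 unfolding G_def by auto
    qed
    then show "G ` \<tau> \<in> L'" using sc_face[OF scL' s] ne by blast
  qed
  have agree: "\<forall>x\<in>vertices (cprod N {{0::nat}}). \<phi> (g x) = G x"
  proof
    fix x assume "x \<in> vertices (cprod N {{0::nat}})"
    then obtain \<tau> where t: "\<tau> \<in> cprod N {{0::nat}}" "x \<in> \<tau>" unfolding vertices_def by blast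
    then have "snd ` \<tau> = {0}" unfolding cprod_def by auto
    then have "snd x = 0" using imageI[OF t(2), of snd] by simp
    then have "G x = h 0" unfolding G_def by (cases x) auto
    then show "\<phi> (g x) = G x" unfolding g_def using psiV(2) hs[OF d0] sV by auto
  qed
  have prem: "simplicial_complex N \<and> edge_path_connected N \<and> finite_complex N \<and> (1::nat) \<ge> 1 \<and>
       simplicial_map (cprod N {{0::nat}}) L g \<and>
       simplicial_map (cprod N (interval 1)) L' G \<and>
       (\<forall>x\<in>vertices (cprod N {{0::nat}}). \<phi> (g x) = G x)"
    using scN epN fN gmap Gmap agree by blast
  obtain Gt where Gt: "simplicial_map (cprod N (interval 1)) L Gt"
      "\<forall>x\<in>vertices (cprod N (interval 1)). \<phi> (Gt x) = G x"
    using fib[unfolded finite_fibration_def, rule_format, OF prem] by blast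
  define \<tau>0 where "\<tau>0 = {0..<d} \<times> {1::nat}"
  have "{1::nat} \<in> interval 1" unfolding interval_def by auto
  moreover have "{0..<d} \<in> N" unfolding N_def using d0 by auto
  ultimately have t0: "\<tau>0 \<in> cprod N (interval 1)" unfolding cprod_def \<tau>0_def using d0 by auto
  have Gt0: "Gt ` \<tau>0 \<in> L" using Gt(1) t0 unfolding simplicial_map_def by blast
  have "Gt ` \<tau>0 = ?\<psi> ` \<sigma>"
  proof -
    have "Gt (k, 1) = ?\<psi> (h k)" if "k < d" for k
    proof -
      have x: "(k, 1) \<in> \<tau>0" using that unfolding \<tau>0_def by auto
      then have "\<phi> (Gt (k, 1)) = h k" using Gt(2) in_vertices[OF t0 x] unfolding G_def by auto
      moreover have "Gt (k, 1) \<in> vertices L" using in_vertices[OF Gt0] x by blast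
      ultimately show ?thesis using psiphi by metis
    qed
    then have "Gt ` \<tau>0 = (\<lambda>k. ?\<psi> (h k)) ` {0..<d}" unfolding \<tau>0_def by force
    also have "\<dots> = ?\<psi> ` \<sigma>" using himg by (metis image_image)
    finally show ?thesis .
  qed
  then show "?\<psi> ` \<sigma> \<in> L" using Gt0 by simp
qed


lemma map_vertex:
  assumes "simplicial_map K K' f" "v \<in> vertices K"
  shows "f v \<in> vertices K'"
proof -
  obtain \<sigma> where s: "\<sigma> \<in> K" "v \<in> \<sigma>" using assms(2) unfolding vertices_def by blast
  then have "f ` \<sigma> \<in> K'" using assms(1) unfolding simplicial_map_def by blast
  then show ?thesis using in_vertices[of "f ` \<sigma>" K' "f v"] s(2) by blast
qed

lemma cprod_vertex:
  assumes "v \<in> vertices (cprod L L')"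
  shows "fst v \<in> vertices L" "snd v \<in> vertices L'"
proof -
  obtain \<sigma> where s: "\<sigma> \<in> cprod L L'" "v \<in> \<sigma>" using assms unfolding vertices_def by blast
  then have "fst ` \<sigma> \<in> L" "snd ` \<sigma> \<in> L'" unfolding cprod_def by auto
  then show "fst v \<in> vertices L" "snd v \<in> vertices L'"
    using in_vertices[of "fst ` \<sigma>" L "fst v"] in_vertices[of "snd ` \<sigma>" L' "snd v"] s(2) by auto
qed

lemma vertices_mono: "J \<subseteq> K \<Longrightarrow> vertices J \<subseteq> vertices K"
  unfolding vertices_def by blast

lemma TCmap_le_TCnmap:
  assumes scL: "simplicial_complex L" and scL': "simplicial_complex L'"
    and phi: "simplicial_map L L' \<phi>" and psi: "simplicial_map L' L \<psi>"
    and pp: "\<forall>x\<in>vertices L. \<psi> (\<phi> x) = x" and qq: "\<forall>y\<in>vertices L'. \<phi> (\<psi> y) = y"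
    and n: "2 \<le> n"
  shows "TC_map L L' \<phi> \<le> TCn_map L L' \<phi> n"
proof -
  define e where "e = (\<lambda>v::'a\<times>'b. fst v # replicate (n - 1) (\<psi> (snd v)))"
  have e_nth: "e v ! i = (if i = 0 then fst v else \<psi> (snd v))" if "i < n" for v i
    using that by (simp add: e_def nth_Cons')
  have e_len: "length (e v) = n" for v using n by (simp add: e_def)
  have emap: "simplicial_map (cprod L L') (cpower L n) e"
    unfolding simplicial_map_def
  proof
    fix \<tau> assume t: "\<tau> \<in> cprod L L'"
    then have ft: "finite \<tau>" "\<tau> \<noteq> {}" "fst ` \<tau> \<in> L" "snd ` \<tau> \<in> L'" unfolding cprod_def by auto
    have "(\<lambda>xs. xs ! i) ` e ` \<tau> \<in> L" if "i < n" for i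
    proof -
      have "(\<lambda>xs. xs ! i) ` e ` \<tau> = (if i = 0 then fst ` \<tau> else \<psi> ` snd ` \<tau>)"
        using e_nth[OF that] by (auto simp: image_image)
      moreover have "\<psi> ` snd ` \<tau> \<in> L" using psi ft(4) unfolding simplicial_map_def by blast
      ultimately show ?thesis using ft(3) by simp
    qed
    then show "e ` \<tau> \<in> cpower L n" unfolding cpower_def using ft(1,2) e_len by auto
  qed
  have scP: "simplicial_complex (cprod L L')" using cprod_sc[OF scL scL'] .
  have H: "\<exists>Bs. (\<forall>j\<le>k. subcomplex (Bs j) (cprod L L')) \<and> (\<Union>j\<le>k. Bs j) = cprod L L' \<and>
      (\<forall>j\<le>k. \<exists>s. simplicial_map (Bs j) (path_complex L) s \<and>
                 (\<forall>v\<in>vertices (Bs j). pi_map \<phi> (s v) = v))"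
    if K1: "\<forall>j\<le>k. subcomplex (Ks j) (cpower L n)" and K2: "(\<Union>j\<le>k. Ks j) = cpower L n"
      and K3: "\<forall>j\<le>k. \<forall>i<length (map (\<lambda>i xs. \<phi> (xs ! i)) [0..<n]). \<forall>l<length (map (\<lambda>i xs. \<phi> (xs ! i)) [0..<n]). contiguity_equiv (Ks j) L' ((map (\<lambda>i xs. \<phi> (xs ! i)) [0..<n]) ! i) ((map (\<lambda>i xs. \<phi> (xs ! i)) [0..<n]) ! l)"
    for Ks :: "nat \<Rightarrow> 'a list set set" and k
  proof -
    define Bs where "Bs = (\<lambda>j. pullback (cprod L L') e (Ks j))"
    have B1: "\<forall>j\<le>k. subcomplex (Bs j) (cprod L L')"
      unfolding Bs_def using pullback_sub[OF scP subcomplex_sc] K1 by blast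
    have B2: "(\<Union>j\<le>k. Bs j) = cprod L L'"
      unfolding Bs_def by (rule pullback_cover[OF emap K2])
    have B3: "\<exists>s. simplicial_map (Bs j) (path_complex L) s \<and> (\<forall>v\<in>vertices (Bs j). pi_map \<phi> (s v) = v)"
      if j: "j \<le> k" for j
    proof -
      have "(map (\<lambda>i xs. \<phi> (xs ! i)) [0..<n]) ! 0 = (\<lambda>xs. \<phi> (xs ! 0))" "(map (\<lambda>i xs. \<phi> (xs ! i)) [0..<n]) ! 1 = (\<lambda>xs. \<phi> (xs ! 1))" "1 < length (map (\<lambda>i xs. \<phi> (xs ! i)) [0..<n])" "0 < length (map (\<lambda>i xs. \<phi> (xs ! i)) [0..<n])"
        using n by auto
      then have c: "contiguity_equiv (Ks j) L' (\<lambda>xs. \<phi> (xs ! 0)) (\<lambda>xs. \<phi> (xs ! 1))"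
        using K3 j by metis
      have c2: "contiguity_equiv (Bs j) L (\<psi> \<circ> ((\<lambda>xs. \<phi> (xs ! 0)) \<circ> e)) (\<psi> \<circ> ((\<lambda>xs. \<phi> (xs ! 1)) \<circ> e))"
        by (rule ceq_comp[OF ceq_pull[OF c] psi]) (unfold Bs_def, rule pullback_map)
      then have sm0: "simplicial_map (Bs j) L (\<psi> \<circ> ((\<lambda>xs. \<phi> (xs ! 0)) \<circ> e))"
        and ch: "(contiguous (Bs j) L)\<^sup>*\<^sup>* (\<psi> \<circ> ((\<lambda>xs. \<phi> (xs ! 0)) \<circ> e)) (\<psi> \<circ> ((\<lambda>xs. \<phi> (xs ! 1)) \<circ> e))"
        unfolding contiguity_equiv_def by blast+
      obtain f M where f: "f 0 = \<psi> \<circ> ((\<lambda>xs. \<phi> (xs ! 0)) \<circ> e)" "f M = \<psi> \<circ> ((\<lambda>xs. \<phi> (xs ! 1)) \<circ> e)"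
        "\<forall>i<M. contiguous (Bs j) L (f i) (f (Suc i))"
        using rtranclp_seq[OF ch] by blast
      have scB: "simplicial_complex (Bs j)" using B1 j subcomplex_sc by blast
      note S = section_from_seq[OF scB scL f(3), unfolded f(1), OF sm0]
      have "pi_map \<phi> ((\<lambda>v i. f (min i M) v) v) = v" if v: "v \<in> vertices (Bs j)" for v
      proof -
        have "v \<in> vertices (cprod L L')" using v vertices_mono B1 j unfolding subcomplex_def by blast
        then have vv: "fst v \<in> vertices L" "snd v \<in> vertices L'" using cprod_vertex by blast+
        have pv: "\<psi> (snd v) \<in> vertices L" using map_vertex[OF psi vv(2)] .
        have "(\<lambda>i. f (min i M) v) 0 = fst v" using S(2) pp vv(1) e_nth[of 0 v] n by simp
        moreover have "\<phi> (path_end (\<lambda>i. f (min i M) v)) = snd v"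
          using S(3)[of v] f(2) e_nth[of 1 v] n pp pv qq vv(2) by simp
        ultimately show ?thesis unfolding pi_map_def by (cases v) simp
      qed
      then show ?thesis using S(1) by blast
    qed
    show ?thesis using B1 B2 B3 by blast
  qed
  show ?thesis
    unfolding TC_map_def schwarz_genus_def TCn_map_def SD_def
    apply (rule Inf_superset_mono)
    apply (rule subsetI)
    apply (elim CollectE exE conjE)
    apply (rule CollectI)
    apply (rule exI)
    apply (rule conjI)
     apply assumption
    apply (rule H)
      apply assumption+
    done
qed


lemma scat_le_TCmap:
  assumes scL: "simplicial_complex L" and scL': "simplicial_complex L'"
    and phi: "simplicial_map L L' \<phi>" and inj: "inj_on \<phi> (vertices L)"
    and v0: "v0 \<in> vertices L" and fin: "finite (vertices L)"
  shows "scat L v0 \<le> TC_map L L' \<phi>"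
proof -
  define \<iota> where "\<iota> = (\<lambda>x::'a. (x, \<phi> v0))"
  have pv0: "{\<phi> v0} \<in> L'" using vertex_singleton[OF scL' map_vertex[OF phi v0]] .
  have imap: "simplicial_map L (cprod L L') \<iota>"
    unfolding simplicial_map_def
  proof
    fix \<sigma> assume s: "\<sigma> \<in> L"
    have ft: "finite \<sigma>" "\<sigma> \<noteq> {}" using sc_fin[OF scL s] by auto
    have "fst ` \<iota> ` \<sigma> = \<sigma>" unfolding \<iota>_def by (simp add: image_image)
    moreover have "snd ` \<iota> ` \<sigma> = {\<phi> v0}" unfolding \<iota>_def using ft(2) by (auto simp: image_image)
    ultimately show "\<iota> ` \<sigma> \<in> cprod L L'" unfolding cprod_def using ft s pv0 by auto
  qed
  have H: "\<exists>Ks. (\<forall>j\<le>k. subcomplex (Ks j) L) \<and> (\<Union>j\<le>k. Ks j) = L \<and>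
      (\<forall>j\<le>k. \<forall>i<length [id, (\<lambda>_. v0)]. \<forall>l<length [id, (\<lambda>_. v0)].
          contiguity_equiv (Ks j) L ([id, (\<lambda>_. v0)] ! i) ([id, (\<lambda>_. v0)] ! l))"
    if B1: "\<forall>j\<le>k. subcomplex (Bs j) (cprod L L')" and B2: "(\<Union>j\<le>k. Bs j) = cprod L L'"
      and B3: "\<forall>j\<le>k. \<exists>s. simplicial_map (Bs j) (path_complex L) s \<and>
                 (\<forall>v\<in>vertices (Bs j). pi_map \<phi> (s v) = v)"
    for Bs :: "nat \<Rightarrow> ('a \<times> 'b) set set" and k
  proof -
    define Ks where "Ks = (\<lambda>j. pullback L \<iota> (Bs j))"
    have K1: "\<forall>j\<le>k. subcomplex (Ks j) L"
      unfolding Ks_def using pullback_sub[OF scL subcomplex_sc] B1 by blast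
    have K2: "(\<Union>j\<le>k. Ks j) = L"
      unfolding Ks_def by (rule pullback_cover[OF imap B2])
    have K3: "contiguity_equiv (Ks j) L id (\<lambda>_. v0)" if j: "j \<le> k" for j
    proof -
      define A where "A = Ks j"
      obtain s where s: "simplicial_map (Bs j) (path_complex L) s"
        "\<forall>v\<in>vertices (Bs j). pi_map \<phi> (s v) = v" using B3 j by blast
      have iA: "simplicial_map A (Bs j) \<iota>" unfolding A_def Ks_def by (rule pullback_map)
      have scA: "simplicial_complex A" using K1 j subcomplex_sc unfolding A_def by blast
      have AL: "A \<subseteq> L" using K1 j unfolding A_def subcomplex_def by blast
      define t where "t = s \<circ> \<iota>"
      have tmap: "simplicial_map A (path_complex L) t" unfolding t_def
        by (rule simplicial_map_comp[OF iA s(1)])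
      define H where "H = (\<lambda>i x. t x i)"
      have key: "H i ` \<tau> \<union> H (Suc i) ` \<tau> \<in> L" if "\<tau> \<in> A" for \<tau> i
      proof -
        have "t ` \<tau> \<in> path_complex L" using tmap that unfolding simplicial_map_def by blast
        then have "(\<Union>\<gamma>\<in>t ` \<tau>. {\<gamma> i, \<gamma> (Suc i)}) \<in> L" unfolding path_complex_def by blast
        moreover have "(\<Union>\<gamma>\<in>t ` \<tau>. {\<gamma> i, \<gamma> (Suc i)}) = H i ` \<tau> \<union> H (Suc i) ` \<tau>"
          unfolding H_def by auto
        ultimately show ?thesis by simp
      qed
      have Hsm: "simplicial_map A L (H i)" for i
        unfolding simplicial_map_def
      proof
        fix \<tau> assume "\<tau> \<in> A"
        moreover then have "H i ` \<tau> \<noteq> {}" using sc_fin[OF scA] by blast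
        ultimately show "H i ` \<tau> \<in> L" using sc_face[OF scL key] by blast
      qed
      have Hc: "contiguous A L (H i) (H (Suc i))" for i
        unfolding contiguous_def using Hsm key by blast
      have chain: "(contiguous A L)\<^sup>*\<^sup>* (H 0) (H N)" for N
      proof (induction N)
        case 0 then show ?case by simp
      next
        case (Suc N) then show ?case using Hc[of N] by (meson rtranclp.rtrancl_into_rtrancl)
      qed
      have vAL: "vertices A \<subseteq> vertices L" using vertices_mono[OF AL] .
      have vx: "t x 0 = x" "\<phi> (path_end (t x)) = \<phi> v0" "t x \<in> spaths L" if x: "x \<in> vertices A" for x
      proof -
        have "\<iota> x \<in> vertices (Bs j)" using map_vertex[OF iA x] .
        then have "pi_map \<phi> (t x) = (x, \<phi> v0)" using s(2) unfolding t_def \<iota>_def by simp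
        then show "t x 0 = x" "\<phi> (path_end (t x)) = \<phi> v0" unfolding pi_map_def by auto
        have "{x} \<in> A" using vertex_singleton[OF scA x] .
        then have "t ` {x} \<in> path_complex L" using tmap unfolding simplicial_map_def by blast
        then show "t x \<in> spaths L" unfolding path_complex_def by auto
      qed
      define P where "P = (\<lambda>x. LEAST N. \<forall>i\<ge>N. t x i = t x N)"
      have Pp: "\<forall>i\<ge>P x. t x i = t x (P x)" if x: "x \<in> vertices A" for x
      proof -
        obtain N where "\<forall>i\<ge>N. t x i = t x N" using vx(3)[OF x] unfolding spaths_def by blast
        then show ?thesis unfolding P_def by (rule LeastI)
      qed
      have pe: "path_end (t x) = v0" if x: "x \<in> vertices A" for x
      proof -
        have "{t x (P x), t x (Suc (P x))} \<in> L" using vx(3)[OF x] unfolding spaths_def by blast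
        then have "t x (P x) \<in> vertices L" using in_vertices[of _ L "t x (P x)"] by blast
        moreover have "path_end (t x) = t x (P x)" unfolding path_end_def P_def by simp
        ultimately show ?thesis using inj v0 vx(2)[OF x] unfolding inj_on_def by metis
      qed
      define N where "N = Max (insert 0 (P ` vertices A))"
      have finA: "finite (vertices A)" using finite_subset[OF vAL fin] .
      have HN: "H N x = v0" if x: "x \<in> vertices A" for x
      proof -
        have "P x \<le> N" unfolding N_def using finA x by (intro Max_ge) auto
        then have "t x N = t x (P x)" using Pp[OF x] by blast
        also have "\<dots> = path_end (t x)" unfolding path_end_def P_def by simp
        finally show ?thesis using pe[OF x] unfolding H_def by simp
      qed
      have idmap: "simplicial_map A L id" using AL unfolding simplicial_map_def by auto
      have cmap: "simplicial_map A L (\<lambda>_. v0)"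
        unfolding simplicial_map_def
      proof
        fix \<tau> assume "\<tau> \<in> A"
        then have "\<tau> \<noteq> {}" using sc_fin[OF scA] by blast
        then have "(\<lambda>_. v0) ` \<tau> = {v0}" by blast
        then show "(\<lambda>_. v0) ` \<tau> \<in> L" using vertex_singleton[OF scL v0] by simp
      qed
      have c1: "contiguous A L id (H 0)"
        by (rule contiguous_agree[OF idmap]) (simp add: H_def vx(1))
      have c2: "contiguous A L (H N) (\<lambda>_. v0)"
        by (rule contiguous_agree[OF Hsm]) (simp add: HN)
      have "(contiguous A L)\<^sup>*\<^sup>* id (\<lambda>_. v0)"
        using c1 c2 chain by (meson converse_rtranclp_into_rtranclp rtranclp.rtrancl_into_rtrancl)
      then show ?thesis using idmap cmap unfolding contiguity_equiv_def A_def by blast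
    qed
    have K3': "\<forall>j\<le>k. \<forall>i<length [id, (\<lambda>_. v0)]. \<forall>l<length [id, (\<lambda>_. v0)].
          contiguity_equiv (Ks j) L ([id, (\<lambda>_. v0)] ! i) ([id, (\<lambda>_. v0)] ! l)"
    proof (intro allI impI)
      fix j i l assume j: "j \<le> k" and i: "i < length [id, (\<lambda>_. v0)]" and l: "l < length [id, (\<lambda>_. v0)]"
      have c: "contiguity_equiv (Ks j) L id (\<lambda>_. v0)" using K3[OF j] .
      have s0: "simplicial_map (Ks j) L id" "simplicial_map (Ks j) L (\<lambda>_. v0)"
        using c unfolding contiguity_equiv_def by blast+
      have "i = 0 \<or> i = 1" "l = 0 \<or> l = 1" using i l by auto
      then show "contiguity_equiv (Ks j) L ([id, (\<lambda>_. v0)] ! i) ([id, (\<lambda>_. v0)] ! l)"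
        using c ceq_sym[OF c] ceq_refl[OF s0(1)] ceq_refl[OF s0(2)] by auto
    qed
    show ?thesis using K1 K2 K3' by blast
  qed
  show ?thesis
    unfolding TC_map_def schwarz_genus_def scat_def SD_def
    apply (rule Inf_superset_mono)
    apply (rule subsetI)
    apply (elim CollectE exE conjE)
    apply (rule CollectI)
    apply (rule exI)
    apply (rule conjI)
     apply assumption
    apply (rule H)
      apply assumption+
    done
qed


lemma TCnmap_le_TCn:
  assumes "simplicial_map L L' \<phi>"
  shows "TCn_map L L' \<phi> m \<le> TCn L m"
proof -
  have e: "map ((\<circ>) \<phi>) (map (\<lambda>i xs. xs ! i) [0..<m]) = map (\<lambda>i xs. \<phi> (xs ! i)) [0..<m]"
    by (simp add: comp_def)
  show ?thesis unfolding TCn_map_def TCn_def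
    using SD_comp[OF assms, of "cpower L m" "map (\<lambda>i xs. xs ! i) [0..<m]"] unfolding e .
qed

theorem theorem6p4:
  fixes L :: "'a set set" and L' :: "'b set set" and \<phi> :: "'a \<Rightarrow> 'b"
    and n :: nat and v0 :: 'a
  assumes "simplicial_complex L" and "edge_path_connected L" and "finite_complex L"
    and "simplicial_complex L'" and "edge_path_connected L'" and "finite_complex L'"
    and "simplicial_map L L' \<phi>"
    and "bij_betw \<phi> (vertices L) (vertices L')"
    and "finite_fibration L L' \<phi>"
    and "n \<ge> 2"
    and "v0 \<in> vertices L"
  shows "scat_map L L' \<phi> v0 \<le> scat L v0 \<and>
         scat L v0 \<le> TC_map L L' \<phi> \<and>
         TC_map L L' \<phi> \<le> min (TC L) (TCn_map L L' \<phi> n) \<and>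
         min (TC L) (TCn_map L L' \<phi> n) \<le> TCn L n"
proof -
  note scL = assms(1) and scL' = assms(4) and phi = assms(7) and bij = assms(8)
  let ?\<psi> = "inv_into (vertices L) \<phi>"
  have psi: "simplicial_map L' L ?\<psi>" using inv_simplicial[OF scL scL' phi bij assms(9)] .
  have inj: "inj_on \<phi> (vertices L)" using bij unfolding bij_betw_def by blast
  have pp: "\<forall>x\<in>vertices L. ?\<psi> (\<phi> x) = x" using inv_into_f_f[OF inj] by blast
  have qq: "\<forall>y\<in>vertices L'. \<phi> (?\<psi> y) = y"
  proof
    fix y assume "y \<in> vertices L'"
    then have "y \<in> \<phi> ` vertices L" using bij by (simp add: bij_betw_def)
    then show "\<phi> (?\<psi> y) = y" by (rule f_inv_into_f)
  qed
  have fin: "finite (vertices L)" using assms(3) unfolding finite_complex_def .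
  have a1: "scat_map L L' \<phi> v0 \<le> scat L v0"
  proof -
    have e: "map ((\<circ>) \<phi>) [id, (\<lambda>_. v0)] = [\<phi>, (\<lambda>_. \<phi> v0)]" by (simp add: comp_def)
    show ?thesis unfolding scat_map_def scat_def
      using SD_comp[OF phi, of L "[id, (\<lambda>_. v0)]"] unfolding e .
  qed
  have a2: "scat L v0 \<le> TC_map L L' \<phi>" by (rule scat_le_TCmap[OF scL scL' phi inj assms(11) fin])
  have t1: "TC_map L L' \<phi> \<le> TCn_map L L' \<phi> n"
    by (rule TCmap_le_TCnmap[OF scL scL' phi psi pp qq assms(10)])
  have t2: "TC_map L L' \<phi> \<le> TC L"
  proof -
    have "TC_map L L' \<phi> \<le> TCn_map L L' \<phi> 2"
      by (rule TCmap_le_TCnmap[OF scL scL' phi psi pp qq]) simp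
    also have "\<dots> \<le> TC L" unfolding TC_def by (rule TCnmap_le_TCn[OF phi])
    finally show ?thesis .
  qed
  have t3: "min (TC L) (TCn_map L L' \<phi> n) \<le> TCn L n"
    using TCnmap_le_TCn[OF phi, of n] min.coboundedI2 by blast
  show ?thesis using a1 a2 t1 t2 t3 by simp
qed

end
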